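(* Let $\mathbf{k}$ be a commutative ring, $\lambda\in\mathbf{k}$ and $X$ a set. With $m$ the product $\diamond$, $u:\mathbf{k}\to\mathbf{k}\mathcal{F}_X^a$, $1\mapsto\bullet$, the angular coproduct $\Delta_a$, and $\epsilon_a:\mathbf{k}\mathcal{F}_X^a\to\mathbf{k}$ given by $\epsilon_a(\bullet)=1$ and $\epsilon_a(F)=0$ for every $F\in\mathcal{F}_X^a$ with $F\neq\bullet$, the quintuple $(\mathbf{k}\mathcal{F}_X^a,m,u,\Delta_a,\epsilon_a)$ is a bialgebra.
   Context: Angularly decorated forests. The set $\mathcal{F}_X^a$ of angularly decorated (planar rooted) forests and its subset of angularly decorated trees are defined recursively: the one-vertex tree $\bullet$ is a tree; if $T_1,\dots,T_k$ ($k\ge1$) are trees and $x_1,\dots,x_{k-1}\in X$, then the word $T_1x_1T_2x_2\cdots x_{k-1}T_k$ is a forest (for $k=1$ it is the tree $T_1$); and if $F=T_1x_1\cdots x_{k-1}T_k$ is a forest, then $B^+(F)$ is a tree, namely the planar tree obtained by adding a new root joined by edges to the roots of $T_1,\dots,T_k$ (in this order), the decoration $x_i$ sitting in the angle between the $i$-th and $(i+1)$-th children. The depth of a tree is the maximal length of a path from root to a leaf; the depth of a forest is the maximum depth of its trees. $\mathbf{k}\mathcal{F}_X^a$ is the free $\mathbf{k}$-module on $\mathcal{F}_X^a$; $B^+$ is extended linearly. Product. The bilinear product $\diamond$ is defined by recursion on the sum of depths: for trees, $\bullet\diamond\bullet=\bullet$, $T\diamond\bullet=T$, $\bullet\diamond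 T=T$, and $B^+(\overline{T})\diamond B^+(\overline{T'})=B^+\big(B^+(\overline{T})\diamond\overline{T'}\big)+B^+\big(\overline{T}\diamond B^+(\overline{T'})\big)+\lambda B^+\big(\overline{T}\diamond\overline{T'}\big)$; for forests $T=T_1x_1\cdots x_{m-1}T_m$ and $T'=T'_1y_1\cdots y_{n-1}T'_n$, $T\diamond T'=T_1x_1\cdots x_{m-1}(T_m\diamond T'_1)y_1T'_2\cdots y_{n-1}T'_n$, extended linearly in the middle factor. This makes $\mathbf{k}\mathcal{F}_X^a$ an associative algebra with unit $\bullet$, and $B^+$ a Rota–Baxter operator of weight $\lambda$. Coproduct. Let $F\in\mathcal{F}_X^a$. A non-leaf vertex is a vertex with at least one child. For a non-leaf vertex $v$, the rooted subtree $F_v$ consists of $v$, its descendants, the edges between them and all decorations in angles between children of its vertices. A decoration occurrence is an occurrence of a letter of $X$ in $F$. An admissible subforest $H$ of $F$ is a finite (possibly empty) set of pieces, each a rooted subtree $F_v$ ($v$ non-leaf) or a single decoration occurrence, pairwise disjoint (no shared vertices among chosen rooted subtrees, no chosen decoration inside a chosen rooted subtree), listed left to right as $H_1,\dots,H_n$. Its closure is $\mathrm{cl}(H)=\widehat{H_1}\diamond\cdots\diamond\widehat{H_n}$ with $\widehat{H_i}=H_i$ for a rooted subtree and $\widehat{H_i}=\bullet x\bullet$ for an occurrence of $x$; $\mathrm{cl}(\emptyset)=\bullet$. The quotient $F/H$ is obtained by replacing each chosen rooted subtree by a leaf $\bullet$ and each chosen decoration occurrence by a symbol $\star$, then evaluating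 recursively: a word $T_1s_1\cdots s_{k-1}T_k$ ($s_i\in X\cup\{\star\}$) evaluates to $\overline{T_1}\diamond c(s_1)\diamond\cdots\diamond c(s_{k-1})\diamond\overline{T_k}$ with $c(x)=\bullet x\bullet$, $c(\star)=\bullet$, $\overline{\bullet}=\bullet$, $\overline{B^+(W)}=B^+(\text{value of }W)$. The angular coproduct is $\Delta_a(F)=\sum_H\mathrm{cl}(H)\otimes F/H$ over all admissible subforests $H$, extended linearly. *)

theory Defs
  imports Main "HOL-Library.Poly_Mapping"
begin

text \<open>The free k-module on a set A is modelled as A =>0 k (finitely supported
functions).  Scalar multiplication and linear extension of a map given on basis
elements.\<close>

definition smul :: "'k::comm_ring_1 \<Rightarrow> ('a \<Rightarrow>\<^sub>0 'k) \<Rightarrow> ('a \<Rightarrow>\<^sub>0 'k)" where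
  "smul c p = Poly_Mapping.map (\<lambda>a. c * a) p"

definition lin :: "('a \<Rightarrow> ('b \<Rightarrow>\<^sub>0 'k::comm_ring_1)) \<Rightarrow> ('a \<Rightarrow>\<^sub>0 'k) \<Rightarrow> ('b \<Rightarrow>\<^sub>0 'k)" where
  "lin f p = (\<Sum>a\<in>Poly_Mapping.keys p. smul (Poly_Mapping.lookup p a) (f a))"

definition lmap :: "('a \<Rightarrow> 'b) \<Rightarrow> ('a \<Rightarrow>\<^sub>0 'k::comm_ring_1) \<Rightarrow> ('b \<Rightarrow>\<^sub>0 'k)" where
  "lmap f p = lin (\<lambda>a. Poly_Mapping.single (f a) 1) p"

definition lfun :: "('a \<Rightarrow> 'k::comm_ring_1) \<Rightarrow> ('a \<Rightarrow>\<^sub>0 'k) \<Rightarrow> 'k" where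
  "lfun f p = (\<Sum>a\<in>Poly_Mapping.keys p. Poly_Mapping.lookup p a * f a)"

text \<open>Tensor products of free modules: k A (x) k B = k (A x B).\<close>

definition tens :: "('a \<Rightarrow>\<^sub>0 'k::comm_ring_1) \<Rightarrow> ('b \<Rightarrow>\<^sub>0 'k) \<Rightarrow> ('a \<times> 'b \<Rightarrow>\<^sub>0 'k)" where
  "tens p q = lin (\<lambda>a. lin (\<lambda>b. Poly_Mapping.single (a, b) 1) q) p"

text \<open>mult a b : product of basis elements, e : the unit element (image of 1 under u),
cop a : coproduct of a basis element, eps a : counit of a basis element.
All maps are extended linearly.\<close>

definition bialgebra ::
  "('a \<Rightarrow> 'a \<Rightarrow> ('a \<Rightarrow>\<^sub>0 'k::comm_ring_1)) \<Rightarrow> ('a \<Rightarrow>\<^sub>0 'k) \<Rightarrow> ('a \<Rightarrow> ('a \<times> 'a \<Rightarrow>\<^sub>0 'k))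
    \<Rightarrow> ('a \<Rightarrow> 'k) \<Rightarrow> bool" where
  "bialgebra mult e cop eps \<longleftrightarrow>
    (let m = (\<lambda>p q. lin (\<lambda>a. lin (\<lambda>b. mult a b) q) p);
         D = lin cop;
         \<epsilon> = lfun eps;
         m2 = (\<lambda>P Q. lin (\<lambda>(a, b). lin (\<lambda>(c, d). tens (m (Poly_Mapping.single a 1) (Poly_Mapping.single c 1))
                                                    (m (Poly_Mapping.single b 1) (Poly_Mapping.single d 1))) Q) P)
     in
      \<comment> \<open>associativity\<close>
      (\<forall>p q r. m (m p q) r = m p (m q r)) \<and>
      \<comment> \<open>unit\<close>
      (\<forall>p. m e p = p \<and> m p e = p) \<and>
      \<comment> \<open>coassociativity: (D (x) id) o D = (id (x) D) o D\<close>
      (\<forall>p. lin (\<lambda>(a, b). lin (\<lambda>(a1, a2). Poly_Mapping.single (a1, a2, b) 1) (cop a)) (D p)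
         = lin (\<lambda>(a, b). lin (\<lambda>(b1, b2). Poly_Mapping.single (a, b1, b2) 1) (cop b)) (D p)) \<and>
      \<comment> \<open>counit: (eps (x) id) o D = id = (id (x) eps) o D\<close>
      (\<forall>p. lin (\<lambda>(a, b). smul (eps a) (Poly_Mapping.single b 1)) (D p) = p \<and>
           lin (\<lambda>(a, b). smul (eps b) (Poly_Mapping.single a 1)) (D p) = p) \<and>
      \<comment> \<open>D and eps are algebra homomorphisms\<close>
      (\<forall>p q. D (m p q) = m2 (D p) (D q)) \<and>
      D e = tens e e \<and>
      (\<forall>p q. \<epsilon> (m p q) = \<epsilon> p * \<epsilon> q) \<and>
      \<epsilon> e = 1)"

text \<open>A tree is either the one-vertex tree Dot or B+(F) for a forest F.
A forest T1 x1 T2 ... x(k-1) Tk is One T1 (k = 1) or More T1 x1 (T2 x2 ... Tk).\<close>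

datatype 'x tree = Dot | Bp "'x forest"
     and 'x forest = One "'x tree" | More "'x tree" 'x "'x forest"

fun firstT :: "'x forest \<Rightarrow> 'x tree" where
  "firstT (One t) = t"
| "firstT (More t x F) = t"

fun lastT :: "'x forest \<Rightarrow> 'x tree" where
  "lastT (One t) = t"
| "lastT (More t x F) = lastT F"

text \<open>splice F s G: the forest T1 x1 ... x(m-1) s y1 T'2 ... y(n-1) T'n where
F = T1 x1 ... Tm and G = T'1 y1 ... T'n.\<close>

fun restF :: "'x tree \<Rightarrow> 'x forest \<Rightarrow> 'x forest" where
  "restF s (One t) = One s"
| "restF s (More t y G) = More s y G"

fun splice :: "'x forest \<Rightarrow> 'x tree \<Rightarrow> 'x forest \<Rightarrow> 'x forest" where
  "splice (One t) s G = restF s G"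
| "splice (More t x F) s G = More t x (splice F s G)"

lemma size_firstT: "size (firstT F) \<le> size F"
  by (cases F) auto

lemma size_lastT: "size (lastT F) \<le> size F"
  by (induction F rule: lastT.induct) auto

lemma size_lastT_firstT: "size (lastT F) + size (firstT G) < Suc (Suc (size F + size G))"
  using size_firstT[of G] size_lastT[of F] by linarith

function tprod :: "'k::comm_ring_1 \<Rightarrow> 'x tree \<Rightarrow> 'x tree \<Rightarrow> ('x tree \<Rightarrow>\<^sub>0 'k)" where
  "tprod lam Dot t = Poly_Mapping.single t 1"
| "tprod lam (Bp F) Dot = Poly_Mapping.single (Bp F) 1"
| "tprod lam (Bp F) (Bp G) =
     lmap (\<lambda>s. Bp (splice (One (Bp F)) s G)) (tprod lam (Bp F) (firstT G))
   + lmap (\<lambda>s. Bp (splice F s (One (Bp G)))) (tprod lam (lastT F) (Bp G))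
   + smul lam (lmap (\<lambda>s. Bp (splice F s G)) (tprod lam (lastT F) (firstT G)))"
  by pat_completeness auto
termination
  by (relation "measure (\<lambda>(l, a, b). size a + size b)")
     (simp_all add: le_imp_less_Suc add_mono size_firstT size_lastT add_le_less_mono add_less_le_mono size_lastT_firstT)

definition fprod :: "'k::comm_ring_1 \<Rightarrow> 'x forest \<Rightarrow> 'x forest \<Rightarrow> ('x forest \<Rightarrow>\<^sub>0 'k)" where
  "fprod lam F G = lmap (\<lambda>s. splice F s G) (tprod lam (lastT F) (firstT G))"

definition diam :: "'k::comm_ring_1 \<Rightarrow> ('x forest \<Rightarrow>\<^sub>0 'k) \<Rightarrow> ('x forest \<Rightarrow>\<^sub>0 'k) \<Rightarrow> ('x forest \<Rightarrow>\<^sub>0 'k)" where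
  "diam lam p q = lin (\<lambda>F. lin (\<lambda>G. fprod lam F G) q) p"

abbreviation bul :: "'x forest" where
  "bul \<equiv> One Dot"

text \<open>Pieces of an admissible subforest: a rooted subtree (at a non-leaf vertex),
or a decoration occurrence.\<close>

datatype 'x piece = PTree "'x tree" | PDec 'x

text \<open>Marked words: a forest in which chosen subtrees are replaced by leaves and
chosen decoration occurrences by a star (None).\<close>

datatype 'x mtree = MDot | MB "'x mforest"
     and 'x mforest = MOne "'x mtree" | MMore "'x mtree" "'x option" "'x mforest"

fun hat :: "'x piece \<Rightarrow> 'x forest" where
  "hat (PTree t) = One t"
| "hat (PDec x) = More Dot x (One Dot)"

definition cl :: "'k::comm_ring_1 \<Rightarrow> 'x piece list \<Rightarrow> ('x forest \<Rightarrow>\<^sub>0 'k)" where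
  "cl lam hs = foldr (\<lambda>h acc. diam lam (Poly_Mapping.single (hat h) 1) acc) hs (Poly_Mapping.single bul 1)"

fun cdec :: "'x option \<Rightarrow> 'x forest" where
  "cdec None = bul"
| "cdec (Some x) = More Dot x (One Dot)"

fun evalT :: "'k::comm_ring_1 \<Rightarrow> 'x mtree \<Rightarrow> ('x tree \<Rightarrow>\<^sub>0 'k)"
and evalF :: "'k::comm_ring_1 \<Rightarrow> 'x mforest \<Rightarrow> ('x forest \<Rightarrow>\<^sub>0 'k)" where
  "evalT lam MDot = Poly_Mapping.single Dot 1"
| "evalT lam (MB W) = lmap Bp (evalF lam W)"
| "evalF lam (MOne t) = lmap One (evalT lam t)"
| "evalF lam (MMore t s W) =
     diam lam (lmap One (evalT lam t)) (diam lam (Poly_Mapping.single (cdec s) 1) (evalF lam W))"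

text \<open>Enumeration of all admissible subforests H, each given as the list of its
pieces (left to right) together with the marked word defining F/H.\<close>

fun admT :: "'x tree \<Rightarrow> ('x piece list \<times> 'x mtree) list"
and admF :: "'x forest \<Rightarrow> ('x piece list \<times> 'x mforest) list" where
  "admT Dot = [([], MDot)]"
| "admT (Bp F) = ([PTree (Bp F)], MDot) # map (\<lambda>(h, w). (h, MB w)) (admF F)"
| "admF (One t) = map (\<lambda>(h, w). (h, MOne w)) (admT t)"
| "admF (More t x F) =
     concat (map (\<lambda>(h1, w1). concat (map (\<lambda>(hx, s). map (\<lambda>(h2, w2). (h1 @ hx @ h2, MMore w1 s w2)) (admF F))
        [([], Some x), ([PDec x], None)])) (admT t))"

definition coprod_a :: "'k::comm_ring_1 \<Rightarrow> 'x forest \<Rightarrow> ('x forest \<times> 'x forest \<Rightarrow>\<^sub>0 'k)" where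
  "coprod_a lam F = sum_list (map (\<lambda>(h, w). tens (cl lam h) (evalF lam w)) (admF F))"

definition eps_a :: "'x forest \<Rightarrow> 'k::comm_ring_1" where
  "eps_a F = (if F = bul then 1 else 0)"

end

theory Submission
  imports Defs
begin

abbreviation lookup :: "('a \<Rightarrow>\<^sub>0 'b::zero) \<Rightarrow> 'a \<Rightarrow> 'b" where "lookup \<equiv> Poly_Mapping.lookup"
abbreviation keys :: "('a \<Rightarrow>\<^sub>0 'b::zero) \<Rightarrow> 'a set" where "keys \<equiv> Poly_Mapping.keys"

abbreviation sg :: "'a \<Rightarrow> ('a \<Rightarrow>\<^sub>0 'k::comm_ring_1)" where "sg a \<equiv> Poly_Mapping.single a 1"

lemma lookup_smul[simp]: "lookup (smul c p) a = c * lookup p a"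
  unfolding smul_def by transfer (auto simp: when_def)

lemma smul_add: "smul c (p + q) = smul c p + smul c q"
  by (rule poly_mapping_eqI) (simp add: lookup_add algebra_simps)
lemma smul_add2: "smul (c + d) p = smul c p + smul d p"
  by (rule poly_mapping_eqI) (simp add: lookup_add algebra_simps)
lemma smul_0[simp]: "smul 0 p = 0"
  by (rule poly_mapping_eqI) simp
lemma smul_zero[simp]: "smul c 0 = 0"
  by (rule poly_mapping_eqI) simp
lemma smul_1[simp]: "smul 1 p = p"
  by (rule poly_mapping_eqI) simp
lemma smul_smul[simp]: "smul c (smul d p) = smul (c * d) p"
  by (rule poly_mapping_eqI) (simp add: algebra_simps)
lemma smul_single[simp]: "smul c (Poly_Mapping.single a d) = Poly_Mapping.single a (c * d)"
  by (rule poly_mapping_eqI) (simp add: lookup_single when_def)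
lemma smul_uminus: "smul c (- p) = - smul c p"
  by (rule poly_mapping_eqI) (simp add: algebra_simps)
lemma smul_minus: "smul c (p - q) = smul c p - smul c q"
  by (rule poly_mapping_eqI) (simp add: lookup_minus algebra_simps)
lemma smul_sum: "smul c (sum f S) = (\<Sum>x\<in>S. smul c (f x))"
  by (induction S rule: infinite_finite_induct) (auto simp: smul_add)
lemma smul_sum_list: "smul c (sum_list xs) = sum_list (map (smul c) xs)"
  by (induction xs) (auto simp: smul_add)

lemma lin_superset:
  assumes "finite S" "keys p \<subseteq> S"
  shows "lin f p = (\<Sum>a\<in>S. smul (lookup p a) (f a))"
  unfolding lin_def
  by (rule sum.mono_neutral_left) (use assms in \<open>auto simp: in_keys_iff\<close>)

lemma lin_add[simp]: "lin f (p + q) = lin f p + lin f q"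
proof -
  have S: "finite (keys p \<union> keys q)" "keys (p+q) \<subseteq> keys p \<union> keys q"
    by (auto simp: keys_add)
  show ?thesis
    by (subst (1 2 3) lin_superset[OF S(1)]) (use S in \<open>auto simp: lookup_add smul_add2 sum.distrib\<close>)
qed

lemma lin_smul[simp]: "lin f (smul c p) = smul c (lin f p)"
proof -
  have S: "finite (keys p)" "keys (smul c p) \<subseteq> keys p"
    by (auto simp: in_keys_iff)
  show ?thesis
    by (subst (1 2) lin_superset[OF S(1)]) (use S in \<open>auto simp: smul_sum\<close>)
qed

lemma lin_zero[simp]: "lin f 0 = 0"
  by (simp add: lin_def)

lemma lin_single[simp]: "lin f (Poly_Mapping.single a c) = smul c (f a)"
  by (cases "c = 0") (simp_all add: lin_def)

lemma lin_uminus[simp]: "lin f (- p) = - lin f p"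
  by (metis add_eq_0_iff2 lin_add lin_zero)
lemma lin_minus[simp]: "lin f (p - q) = lin f p - lin f q"
  by (metis add_diff_cancel_right' diff_add_cancel lin_add)

lemma lin_sum: "lin f (sum g S) = (\<Sum>x\<in>S. lin f (g x))"
  by (induction S rule: infinite_finite_induct) auto
lemma lin_sum_list: "lin f (sum_list xs) = sum_list (map (lin f) xs)"
  by (induction xs) auto

lemma lin_fadd: "lin (\<lambda>a. f a + g a) p = lin f p + lin g p"
  by (simp add: lin_def smul_add sum.distrib)
lemma lin_fsmul: "lin (\<lambda>a. smul c (f a)) p = smul c (lin f p)"
  by (simp add: lin_def smul_sum mult.commute)
lemma lin_fzero[simp]: "lin (\<lambda>a. 0) p = 0"
  by (simp add: lin_def)
lemma lin_cong: "(\<And>a. a \<in> keys p \<Longrightarrow> f a = g a) \<Longrightarrow> lin f p = lin g p"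
  by (simp add: lin_def)

lemma basis_expand: "p = (\<Sum>a\<in>keys p. smul (lookup p a) (sg a))"
  by (rule poly_mapping_eqI) (simp add: lookup_sum lookup_single when_def in_keys_iff)

lemma lin_sg[simp]: "lin sg p = p"
  unfolding lin_def by (rule basis_expand[symmetric])

named_theorems lin_intros

definition islin :: "(('a \<Rightarrow>\<^sub>0 'k::comm_ring_1) \<Rightarrow> ('b \<Rightarrow>\<^sub>0 'k)) \<Rightarrow> bool" where
  "islin f \<longleftrightarrow> (\<forall>p q. f (p + q) = f p + f q) \<and> (\<forall>c p. f (smul c p) = smul c (f p))"

lemma islinD: "islin f \<Longrightarrow> f (p + q) = f p + f q" "islin f \<Longrightarrow> f (smul c p) = smul c (f p)"
  by (auto simp: islin_def)

lemma islin_zero: "islin f \<Longrightarrow> f 0 = 0"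
  by (metis islinD(2) smul_0)

lemma islin_sum: assumes "islin f" shows "f (sum g S) = (\<Sum>x\<in>S. f (g x))"
proof (induction S rule: infinite_finite_induct)
  case (infinite A)
  then show ?case using islin_zero[OF assms] by simp
next
  case empty
  then show ?case using islin_zero[OF assms] by simp
next
  case (insert x F)
  then show ?case using islinD(1)[OF assms] by simp
qed

lemma islin_expand: assumes "islin f" shows "f p = lin (\<lambda>a. f (sg a)) p"
proof -
  have "f p = f (\<Sum>a\<in>keys p. smul (lookup p a) (sg a))"
    using basis_expand[of p] by (rule arg_cong)
  also have "\<dots> = lin (\<lambda>a. f (sg a)) p"
    unfolding lin_def islin_sum[OF assms] islinD(2)[OF assms] ..
  finally show ?thesis .
qed

lemma islin_eqI: "islin f \<Longrightarrow> islin g \<Longrightarrow> (\<And>a. f (sg a) = g (sg a)) \<Longrightarrow> f p = g p"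
proof -
  assume a: "islin f" "islin g" "\<And>a. f (sg a) = g (sg a)"
  show "f p = g p" using islin_expand[OF a(1), of p] islin_expand[OF a(2), of p] a(3) by simp
qed

lemma islin_lin[lin_intros]: "islin f \<Longrightarrow> islin (\<lambda>p. lin g (f p))"
  by (simp add: islin_def)
lemma islin_id[lin_intros]: "islin (\<lambda>p. p)"
  by (simp add: islin_def)
lemma islin_add[lin_intros]: "islin f \<Longrightarrow> islin g \<Longrightarrow> islin (\<lambda>p. f p + g p)"
  by (simp add: islin_def smul_add)
lemma islin_smul[lin_intros]: "islin f \<Longrightarrow> islin (\<lambda>p. smul c (f p))"
  by (simp add: islin_def mult.commute smul_add)
lemma islin_const0[lin_intros]: "islin (\<lambda>p. 0)"
  by (simp add: islin_def)
lemma islin_lin2[lin_intros]: "(\<And>a. islin (G a)) \<Longrightarrow> islin f \<Longrightarrow> islin (\<lambda>p. lin (\<lambda>a. G a (f p)) q)"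
  by (simp add: islin_def lin_fadd lin_fsmul)

lemma bilin_eqI:
  assumes "\<And>q. islin (\<lambda>p. L p q)" "\<And>q. islin (\<lambda>p. R p q)"
    "\<And>a. islin (L (sg a))" "\<And>a. islin (R (sg a))"
    "\<And>a b. L (sg a) (sg b) = R (sg a) (sg b)"
  shows "L p q = R p q"
proof -
  have "L (sg a) q = R (sg a) q" for a
    by (rule islin_eqI[OF assms(3) assms(4)]) (rule assms(5))
  then show ?thesis by (rule islin_eqI[where f="\<lambda>p. L p q" and g="\<lambda>p. R p q", OF assms(1) assms(2)])
qed


lemma lin_lin: "lin h (lin g p) = lin (\<lambda>a. lin h (g a)) p"
  by (rule islin_eqI[where f="\<lambda>p. lin h (lin g p)"]) (auto intro!: lin_intros)

lemma lmap_single[simp]: "lmap f (Poly_Mapping.single a c) = Poly_Mapping.single (f a) c"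
  by (simp add: lmap_def)
lemma lmap_add[simp]: "lmap f (p + q) = lmap f p + lmap f q"
  by (simp add: lmap_def)
lemma lmap_smul[simp]: "lmap f (smul c p) = smul c (lmap f p)"
  by (simp add: lmap_def)
lemma lmap_zero[simp]: "lmap f 0 = 0"
  by (simp add: lmap_def)
lemma lmap_lmap[simp]: "lmap f (lmap g p) = lmap (\<lambda>a. f (g a)) p"
  by (simp add: lmap_def lin_lin)
lemma lin_lmap[simp]: "lin h (lmap g p) = lin (\<lambda>a. h (g a)) p"
  by (simp add: lmap_def lin_lin)
lemma lmap_lin: "lmap h (lin g p) = lin (\<lambda>a. lmap h (g a)) p"
  by (simp add: lmap_def lin_lin)
lemma islin_lmap[lin_intros]: "islin f \<Longrightarrow> islin (\<lambda>p. lmap g (f p))"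
  unfolding lmap_def by (rule lin_intros)

lemma tens_single[simp]: "tens (Poly_Mapping.single a c) (Poly_Mapping.single b d) = Poly_Mapping.single (a, b) (c * d)"
  by (simp add: tens_def)
lemma tens_add1[simp]: "tens (p + p') q = tens p q + tens p' q"
  by (simp add: tens_def)
lemma tens_add2[simp]: "tens p (q + q') = tens p q + tens p q'"
  by (simp add: tens_def lin_fadd)
lemma tens_smul1[simp]: "tens (smul c p) q = smul c (tens p q)"
  by (simp add: tens_def)
lemma tens_smul2[simp]: "tens p (smul c q) = smul c (tens p q)"
  by (simp add: tens_def lin_fsmul)
lemma tens_zero1[simp]: "tens 0 q = 0"
  by (simp add: tens_def)
lemma tens_zero2[simp]: "tens p 0 = 0"
  by (simp add: tens_def)
lemma islin_tens1[lin_intros]: "islin f \<Longrightarrow> islin (\<lambda>p. tens (f p) q)"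
  by (simp add: islin_def)
lemma islin_tens2[lin_intros]: "islin f \<Longrightarrow> islin (\<lambda>p. tens q (f p))"
  by (simp add: islin_def)
lemma tens_sum_list1: "tens (sum_list xs) q = sum_list (map (\<lambda>p. tens p q) xs)"
  by (induction xs) auto
lemma tens_sum_list2: "tens q (sum_list xs) = sum_list (map (\<lambda>p. tens q p) xs)"
  by (induction xs) auto

lemma lfun_superset:
  assumes "finite S" "keys p \<subseteq> S"
  shows "lfun f p = (\<Sum>a\<in>S. lookup p a * f a)"
  unfolding lfun_def
  by (rule sum.mono_neutral_left) (use assms in \<open>auto simp: in_keys_iff\<close>)
lemma lfun_add[simp]: "lfun f (p + q) = lfun f p + lfun f q"
proof -
  have S: "finite (keys p \<union> keys q)" "keys (p+q) \<subseteq> keys p \<union> keys q"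
    by (auto simp: keys_add)
  show ?thesis
    by (subst (1 2 3) lfun_superset[OF S(1)]) (use S in \<open>auto simp: lookup_add algebra_simps sum.distrib\<close>)
qed
lemma lfun_smul[simp]: "lfun f (smul c p) = c * lfun f p"
proof -
  have S: "finite (keys p)" "keys (smul c p) \<subseteq> keys p"
    by (auto simp: in_keys_iff)
  show ?thesis
    by (subst (1 2) lfun_superset[OF S(1)]) (use S in \<open>auto simp: sum_distrib_left algebra_simps\<close>)
qed
lemma lfun_single[simp]: "lfun f (Poly_Mapping.single a c) = c * f a"
  by (cases "c = 0") (simp_all add: lfun_def)
lemma lfun_zero[simp]: "lfun f 0 = 0"
  by (simp add: lfun_def)
lemma lfun_sum: "lfun f (sum g S) = (\<Sum>x\<in>S. lfun f (g x))"
  by (induction S rule: infinite_finite_induct) auto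
lemma lfun_lin: "lfun f (lin g p) = lfun (\<lambda>a. lfun f (g a)) p"
  by (simp add: lin_def lfun_sum) (simp add: lfun_def mult.commute)

lemma restF_firstT[simp]: "restF (firstT Q) Q = Q"
  by (cases Q) auto
lemma splice_lastT[simp]: "splice P (lastT P) bul = P"
  by (induction P) auto
lemma tprod_Dot2[simp]: "tprod lam t Dot = sg t"
  by (cases t) auto

fun app :: "'x forest \<Rightarrow> 'x \<Rightarrow> 'x forest \<Rightarrow> 'x forest" where
  "app (One t) x R = More t x R"
| "app (More t y S) x R = More t y (app S x R)"

lemma lastT_app[simp]: "lastT (app S x R) = lastT R"
  by (induction S) auto
lemma firstT_app[simp]: "firstT (app U x R) = firstT U"
  by (cases U) auto
lemma splice_app_right: "splice S s (app U x R) = app (splice S s U) x R"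
  by (induction S) (cases U; auto)+
lemma splice_app_left: "splice (app S x R) s T = app S x (splice R s T)"
  by (induction S) auto

context fixes lam :: "'k::comm_ring_1" begin

abbreviation dm where "dm \<equiv> diam lam"
abbreviation fp where "fp \<equiv> fprod lam"
abbreviation Bl :: "('x forest \<Rightarrow>\<^sub>0 'k) \<Rightarrow> ('x forest \<Rightarrow>\<^sub>0 'k)" where "Bl \<equiv> lmap (\<lambda>F. One (Bp F))"

lemma dm_single[simp]: "dm (Poly_Mapping.single a c) (Poly_Mapping.single b d) = smul (c * d) (fp a b)"
  by (simp add: diam_def)
lemma dm_add1[simp]: "dm (p + p') q = dm p q + dm p' q"
  by (simp add: diam_def)
lemma dm_add2[simp]: "dm p (q + q') = dm p q + dm p q'"
  by (simp add: diam_def lin_fadd)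
lemma dm_smul1[simp]: "dm (smul c p) q = smul c (dm p q)"
  by (simp add: diam_def)
lemma dm_smul2[simp]: "dm p (smul c q) = smul c (dm p q)"
  by (simp add: diam_def lin_fsmul)
lemma dm_zero1[simp]: "dm 0 q = 0"
  by (simp add: diam_def)
lemma dm_zero2[simp]: "dm p 0 = 0"
  by (simp add: diam_def)
lemma islin_dm1[lin_intros]: "islin f \<Longrightarrow> islin (\<lambda>p. dm (f p) q)"
  by (simp add: islin_def)
lemma islin_dm2[lin_intros]: "islin f \<Longrightarrow> islin (\<lambda>p. dm q (f p))"
  by (simp add: islin_def)

lemma fp_More: "fp (More t x P) Q = lmap (More t x) (fp P Q)"
  by (simp add: fprod_def)
lemma fp_app_left: "fp (app S x P) Q = lmap (app S x) (fp P Q)"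
  by (simp add: fprod_def splice_app_left)
lemma fp_app_right: "fp S (app U x R) = lmap (\<lambda>V. app V x R) (fp S U)"
  by (simp add: fprod_def splice_app_right)
lemma fp_One_One: "fp (One t) (One u) = lmap One (tprod lam t u)"
  by (simp add: fprod_def)
lemma fp_One_More: "fp (One t) (More u y Q) = lmap (\<lambda>s. More s y Q) (tprod lam t u)"
  by (simp add: fprod_def)
lemma fp_unit1[simp]: "fp bul Q = sg Q"
  by (simp add: fprod_def)
lemma fp_unit2[simp]: "fp P bul = sg P"
  by (simp add: fprod_def)

lemma dm_unit1[simp]: "dm (sg bul) p = p"
  by (rule islin_eqI[where f="\<lambda>p. dm (sg bul) p"]) (auto intro!: lin_intros)
lemma dm_unit2[simp]: "dm p (sg bul) = p"
  by (rule islin_eqI[where f="\<lambda>p. dm p (sg bul)"]) (auto intro!: lin_intros)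

lemma dm_lmap_app_left: "dm (lmap (app S x) W) (sg R) = lmap (app S x) (dm W (sg R))"
  by (rule islin_eqI[where f="\<lambda>W. dm (lmap (app S x) W) (sg R)"]) (auto intro!: lin_intros simp: fp_app_left)
lemma dm_app_left: "dm (sg (app S x P)) W = lmap (app S x) (dm (sg P) W)"
  by (rule islin_eqI[where f="\<lambda>W. dm (sg (app S x P)) W"]) (auto intro!: lin_intros simp: fp_app_left)
lemma dm_app_right: "dm W (sg (app U x R)) = lmap (\<lambda>V. app V x R) (dm W (sg U))"
  by (rule islin_eqI[where f="\<lambda>W. dm W (sg (app U x R))"]) (auto intro!: lin_intros simp: fp_app_right)
lemma dm_lmap_app_right: "dm (sg S) (lmap (\<lambda>V. app V x R) W) = lmap (\<lambda>V. app V x R) (dm (sg S) W)"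
  by (rule islin_eqI[where f="\<lambda>W. dm (sg S) (lmap (\<lambda>V. app V x R) W)"]) (auto intro!: lin_intros simp: fp_app_right)

lemma RB_basis: "fp (One (Bp F)) (One (Bp G)) = Bl (fp (One (Bp F)) G + fp F (One (Bp G)) + smul lam (fp F G))"
  by (simp add: fprod_def)

lemma RB: "dm (Bl u) (Bl v) = Bl (dm (Bl u) v + dm u (Bl v) + smul lam (dm u v))"
  by (rule bilin_eqI[where L="\<lambda>u v. dm (Bl u) (Bl v)"]) (auto intro!: lin_intros simp: RB_basis)


definition appl :: "('x forest \<Rightarrow>\<^sub>0 'k) \<Rightarrow> 'x \<Rightarrow> ('x forest \<Rightarrow>\<^sub>0 'k) \<Rightarrow> ('x forest \<Rightarrow>\<^sub>0 'k)" where
  "appl W y Z = lin (\<lambda>V. lmap (app V y) Z) W"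

lemma appl_A: "dm (lmap (\<lambda>V. app V y Q') W) (sg R) = appl W y (fp Q' R)"
  unfolding appl_def
  by (rule islin_eqI[where f="\<lambda>W. dm (lmap (\<lambda>V. app V y Q') W) (sg R)"]) (auto intro!: lin_intros simp: fp_app_left)
lemma appl_B: "dm (sg P) (lmap (app U y) Z) = appl (dm (sg P) (sg U)) y Z"
  unfolding appl_def
  by (rule islin_eqI[where f="\<lambda>Z. dm (sg P) (lmap (app U y) Z)"]) (auto intro!: lin_intros simp: fp_app_right lmap_def)

lemma size_forest_pos[simp]: "0 < size (F::'x forest)"
  by (cases F) auto

lemma More_app: "More t x P = app (One t) x P"
  by simp

lemma assoc_basis: "dm (fp (P::'x forest) Q) (sg R) = dm (sg P) (fp Q R)"
proof (induction "size P + size Q + size R" arbitrary: P Q R rule: less_induct)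
  case less
  show ?case
  proof (cases P)
    case (More t x P')
    have "dm (fp P Q) (sg R) = lmap (app (One t) x) (dm (fp P' Q) (sg R))"
      unfolding More More_app fp_app_left dm_lmap_app_left ..
    also have "\<dots> = lmap (app (One t) x) (dm (sg P') (fp Q R))"
      using less[of P' Q R] More by simp
    also have "\<dots> = dm (sg P) (fp Q R)"
      unfolding More More_app dm_app_left ..
    finally show ?thesis .
  next
    case (One p)
    show ?thesis
    proof (cases R)
      case (More r x R')
      have "dm (fp P Q) (sg R) = lmap (\<lambda>V. app V x R') (dm (fp P Q) (sg (One r)))"
        unfolding More More_app dm_app_right ..
      also have "\<dots> = lmap (\<lambda>V. app V x R') (dm (sg P) (fp Q (One r)))"
        using less[of P Q "One r"] More by simp
      also have "\<dots> = dm (sg P) (fp Q R)"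
        unfolding More More_app fp_app_right dm_lmap_app_right ..
      finally show ?thesis .
    next
      case (One r)
      note Rr = One
      show ?thesis
      proof (cases Q)
        case (More q y Q')
        have "dm (fp P Q) (sg R) = appl (dm (sg P) (sg (One q))) y (fp Q' R)"
          unfolding More More_app fp_app_right appl_A by simp
        also have "\<dots> = dm (sg P) (fp Q R)"
          unfolding More More_app fp_app_left appl_B ..
        finally show ?thesis .
      next
        case (One q)
        note Qq = One
        show ?thesis
        proof (cases "p = Dot \<or> q = Dot \<or> r = Dot")
          case True
          then show ?thesis using \<open>P = One p\<close> Qq Rr by auto
        next
          case False
          then obtain F G H where PQR: "P = One (Bp F)" "Q = One (Bp G)" "R = One (Bp H)"
            using \<open>P = One p\<close> Qq Rr by (metis tree.exhaust)
          define u where "u = fp (One (Bp F)) G + fp F (One (Bp G)) + smul lam (fp F G)"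
          define v where "v = fp (One (Bp G)) H + fp G (One (Bp H)) + smul lam (fp G H)"
          have L: "dm (fp P Q) (sg R) = Bl (dm (fp P Q) (sg H) + dm u (sg R) + smul lam (dm u (sg H)))"
          proof -
            have "dm (fp P Q) (sg R) = dm (Bl u) (Bl (sg H))"
              unfolding PQR u_def by (simp only: RB_basis lmap_single)
            also have "\<dots> = Bl (dm (Bl u) (sg H) + dm u (Bl (sg H)) + smul lam (dm u (sg H)))"
              by (rule RB)
            also have "\<dots> = Bl (dm (fp P Q) (sg H) + dm u (sg R) + smul lam (dm u (sg H)))"
              unfolding PQR u_def by (simp only: RB_basis lmap_single)
            finally show ?thesis .
          qed
          have R: "dm (sg P) (fp Q R) = Bl (dm (sg P) v + dm (sg F) (fp Q R) + smul lam (dm (sg F) v))"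
          proof -
            have "dm (sg P) (fp Q R) = dm (Bl (sg F)) (Bl v)"
              unfolding PQR v_def by (simp only: RB_basis lmap_single)
            also have "\<dots> = Bl (dm (Bl (sg F)) v + dm (sg F) (Bl v) + smul lam (dm (sg F) v))"
              by (rule RB)
            also have "\<dots> = Bl (dm (sg P) v + dm (sg F) (fp Q R) + smul lam (dm (sg F) v))"
              unfolding PQR v_def by (simp only: RB_basis lmap_single)
            finally show ?thesis .
          qed
          have IH: "dm (fp A B) (sg C) = dm (sg A) (fp B C)"
            if "size A + size B + size C < size P + size Q + size R" for A B C :: "'x forest"
            by (rule less(1)) (rule that)
          show ?thesis unfolding L R u_def v_def
            using PQR by (simp add: IH algebra_simps smul_add)
        qed
      qed
    qed
  qed
qed


lemma assoc: "dm (dm p q) r = dm p (dm q r)"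
proof -
  have 1: "dm (dm (sg a) (sg b)) r = dm (sg a) (dm (sg b) r)" for a b
    by (rule islin_eqI[where f="\<lambda>r. dm (dm (sg a) (sg b)) r"]) (auto intro!: lin_intros simp: assoc_basis)
  have 2: "dm (dm (sg a) q) r = dm (sg a) (dm q r)" for a
    by (rule islin_eqI[where f="\<lambda>q. dm (dm (sg a) q) r"], (intro lin_intros)+, rule 1)
  show ?thesis
    by (rule islin_eqI[where f="\<lambda>p. dm (dm p q) r"], (intro lin_intros)+, rule 2)
qed

end

definition bilin :: "(('a \<Rightarrow>\<^sub>0 'k::comm_ring_1) \<Rightarrow> ('b \<Rightarrow>\<^sub>0 'k) \<Rightarrow> ('c \<Rightarrow>\<^sub>0 'k)) \<Rightarrow> bool" where
  "bilin m \<longleftrightarrow> (\<forall>q. islin (\<lambda>p. m p q)) \<and> (\<forall>p. islin (\<lambda>q. m p q))"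

lemma bilinD1: "bilin m \<Longrightarrow> islin (\<lambda>p. m p q)" and bilinD2: "bilin m \<Longrightarrow> islin (\<lambda>q. m p q)"
  by (auto simp: bilin_def)

definition mt where
  "mt mA mB P Q = lin (\<lambda>(a, b). lin (\<lambda>(c, d). tens (mA (sg a) (sg c)) (mB (sg b) (sg d))) Q) P"

lemma mt_single[simp]: "mt mA mB (sg (a, b)) (sg (c, d)) = tens (mA (sg a) (sg c)) (mB (sg b) (sg d))"
  by (simp add: mt_def)
lemma islin_mt1[lin_intros]: "islin f \<Longrightarrow> islin (\<lambda>p. mt mA mB (f p) Q)"
  unfolding mt_def by (rule lin_intros)
lemma islin_mt2[lin_intros]: "islin f \<Longrightarrow> islin (\<lambda>p. mt mA mB Q (f p))"
  unfolding mt_def by (rule lin_intros) (auto intro: lin_intros simp: case_prod_beta)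
lemma bilin_mt: "bilin (mt mA mB)"
  unfolding bilin_def by (auto intro!: lin_intros)
lemma mt_add1[simp]: "mt mA mB (p + p') q = mt mA mB p q + mt mA mB p' q"
  by (simp add: mt_def)
lemma mt_add2[simp]: "mt mA mB p (q + q') = mt mA mB p q + mt mA mB p q'"
  by (rule islinD(1)[OF islin_mt2[OF islin_id]])
lemma mt_smul1[simp]: "mt mA mB (smul c p) q = smul c (mt mA mB p q)"
  by (simp add: mt_def)
lemma mt_smul2[simp]: "mt mA mB p (smul c q) = smul c (mt mA mB p q)"
  by (rule islinD(2)[OF islin_mt2[OF islin_id]])
lemma mt_zero1[simp]: "mt mA mB 0 q = 0"
  by (simp add: mt_def)
lemma mt_zero2[simp]: "mt mA mB p 0 = 0"
  by (rule islin_zero[OF islin_mt2[OF islin_id]])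

lemma mt_tens:
  assumes A: "bilin mA" and B: "bilin mB"
  shows "mt mA mB (tens p q) (tens r s) = tens (mA p r) (mB q s)"
proof -
  have 1: "mt mA mB (tens (sg a) (sg b)) (tens (sg c) s) = tens (mA (sg a) (sg c)) (mB (sg b) s)" for a b c
    by (rule islin_eqI[where f="\<lambda>s. mt mA mB (tens (sg a) (sg b)) (tens (sg c) s)"],
        (intro lin_intros bilinD2[OF B])+) simp
  have 2: "mt mA mB (tens (sg a) (sg b)) (tens r s) = tens (mA (sg a) r) (mB (sg b) s)" for a b
    by (rule islin_eqI[where f="\<lambda>r. mt mA mB (tens (sg a) (sg b)) (tens r s)"],
        (intro lin_intros bilinD2[OF A])+) (rule 1)
  have 3: "mt mA mB (tens (sg a) q) (tens r s) = tens (mA (sg a) r) (mB q s)" for a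
    by (rule islin_eqI[where f="\<lambda>q. mt mA mB (tens (sg a) q) (tens r s)"],
        (intro lin_intros bilinD1[OF B])+) (rule 2)
  show ?thesis
    by (rule islin_eqI[where f="\<lambda>p. mt mA mB (tens p q) (tens r s)"],
        (intro lin_intros bilinD1[OF A])+) (rule 3)
qed

lemma mt_tens_sg2:
  assumes A: "bilin mA" and B: "bilin mB"
  shows "mt mA mB (tens p q) (sg (c, d)) = tens (mA p (sg c)) (mB q (sg d))"
  using mt_tens[OF A B, of p q "sg c" "sg d"] by simp

lemma mt_tens_sg1:
  assumes A: "bilin mA" and B: "bilin mB"
  shows "mt mA mB (sg (a, b)) (tens r s) = tens (mA (sg a) r) (mB (sg b) s)"
  using mt_tens[OF A B, of "sg a" "sg b" r s] by simp

lemma mt_assoc: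
  fixes mA :: "('a \<Rightarrow>\<^sub>0 'k::comm_ring_1) \<Rightarrow> ('a \<Rightarrow>\<^sub>0 'k) \<Rightarrow> ('a \<Rightarrow>\<^sub>0 'k)"
    and mB :: "('b \<Rightarrow>\<^sub>0 'k) \<Rightarrow> ('b \<Rightarrow>\<^sub>0 'k) \<Rightarrow> ('b \<Rightarrow>\<^sub>0 'k)"
  assumes A: "bilin mA" and B: "bilin mB"
    and aA: "\<And>p q r. mA (mA p q) r = mA p (mA q r)"
    and aB: "\<And>p q r. mB (mB p q) r = mB p (mB q r)"
  shows "mt mA mB (mt mA mB P Q) R = mt mA mB P (mt mA mB Q R)"
proof -
  have 1: "mt mA mB (mt mA mB (sg a) (sg b)) R = mt mA mB (sg a) (mt mA mB (sg b) R)" for a b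
  proof (rule islin_eqI[where f="\<lambda>R. mt mA mB (mt mA mB (sg a) (sg b)) R"], (intro lin_intros)+)
    fix c :: "'a \<times> 'b"
    obtain a1 a2 b1 b2 c1 c2 where "a = (a1, a2)" "b = (b1, b2)" "c = (c1, c2)" by (metis prod.exhaust)
    then show "mt mA mB (mt mA mB (sg a) (sg b)) (sg c) = mt mA mB (sg a) (mt mA mB (sg b) (sg c))"
      using mt_tens_sg2[OF A B] mt_tens_sg1[OF A B] by (simp add: aA aB)
  qed
  have 2: "mt mA mB (mt mA mB (sg a) Q) R = mt mA mB (sg a) (mt mA mB Q R)" for a
    by (rule islin_eqI[where f="\<lambda>Q. mt mA mB (mt mA mB (sg a) Q) R"], (intro lin_intros)+) (rule 1)
  show ?thesis
    by (rule islin_eqI[where f="\<lambda>P. mt mA mB (mt mA mB P Q) R"], (intro lin_intros)+) (rule 2)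
qed

lemma islin_comp: "islin g \<Longrightarrow> islin f \<Longrightarrow> islin (\<lambda>a. g (f a))"
  by (simp add: islin_def)

lemma lin_comp: assumes "islin g" shows "lin (\<lambda>a. g (f a)) p = g (lin f p)"
proof (rule islin_eqI[where f="\<lambda>p. lin (\<lambda>a. g (f a)) p"])
  show "islin (\<lambda>p. g (lin f p))" by (rule islin_comp[OF assms islin_lin[OF islin_id]])
qed (auto intro: lin_intros)

lemma islin_sum_list: "islin f \<Longrightarrow> f (sum_list xs) = sum_list (map f xs)"
  by (induction xs) (auto simp: islin_zero islinD)


lemma sum_list_concat': "sum_list (concat xss) = sum_list (map sum_list xss)"
  by (induction xss) auto

definition dec :: "'x \<Rightarrow> 'x forest" where "dec x = More Dot x bul"


context fixes lam :: "'k::comm_ring_1" begin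

abbreviation cop :: "'x forest \<Rightarrow> ('x forest \<times> 'x forest \<Rightarrow>\<^sub>0 'k)" where "cop \<equiv> coprod_a lam"
abbreviation m2 where "m2 \<equiv> mt (dm lam) (dm lam)"
definition Dx :: "'x \<Rightarrow> ('x forest \<times> 'x forest \<Rightarrow>\<^sub>0 'k)" where
  "Dx x = sg (bul, dec x) + sg (dec x, bul)"
abbreviation Lt :: "('x forest \<times> 'x forest \<Rightarrow>\<^sub>0 'k) \<Rightarrow> ('x forest \<times> 'x forest \<Rightarrow>\<^sub>0 'k)" where
  "Lt W \<equiv> lin (\<lambda>(a, b). sg (a, One (Bp b))) W"

lemma bilin_dm: "bilin (dm lam)"
  unfolding bilin_def by (auto intro!: lin_intros)

lemma m2_tens: "m2 (tens p q) (tens r s) = tens (dm lam p r) (dm lam q s)"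
  by (rule mt_tens[OF bilin_dm bilin_dm])

lemma m2_assoc: "m2 (m2 P Q) R = m2 P (m2 Q R)"
  by (rule mt_assoc[OF bilin_dm bilin_dm assoc assoc])

lemma m2_unit1[simp]: "m2 (sg (bul, bul)) W = W"
  by (rule islin_eqI[where f="\<lambda>W. m2 (sg (bul, bul)) W"]) (auto intro!: lin_intros)
lemma m2_unit2[simp]: "m2 W (sg (bul, bul)) = W"
  by (rule islin_eqI[where f="\<lambda>W. m2 W (sg (bul, bul))"]) (auto intro!: lin_intros)

lemma cl_Nil[simp]: "cl lam [] = sg bul"
  by (simp add: cl_def)
lemma cl_Cons[simp]: "cl lam (h # xs) = dm lam (sg (hat h)) (cl lam xs)"
  by (simp add: cl_def)
lemma cl_append: "cl lam (xs @ ys) = dm lam (cl lam xs) (cl lam ys)"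
  by (induction xs) (auto simp: assoc)

lemma cop_bul: "cop bul = sg (bul, bul)"
  by (simp add: coprod_a_def)

lemma Lt_tens: "Lt (tens p q) = tens p (Bl q)"
proof -
  have "Lt (tens (sg a) q) = tens (sg a) (Bl q)" for a
    by (rule islin_eqI[where f="\<lambda>q. Lt (tens (sg a) q)"]) (auto intro!: lin_intros)
  then show ?thesis
    by (rule islin_eqI[where f="\<lambda>p. Lt (tens p q)", rotated 2]) (auto intro!: lin_intros)
qed

lemma cop_Bp: "cop (One (Bp F)) = sg (One (Bp F), bul) + Lt (cop F)"
proof -
  have "Lt (cop F) = sum_list (map (\<lambda>(h, w). tens (cl lam h) (Bl (evalF lam w))) (admF F))"
    unfolding coprod_a_def
    by (simp add: islin_sum_list[OF islin_lin[OF islin_id]] Lt_tens[unfolded case_prod_unfold] case_prod_unfold o_def)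
  then show ?thesis
    by (simp add: coprod_a_def case_prod_unfold o_def)
qed


lemma K: "sum_list (map (\<lambda>(h2, w2). tens (dm lam A1 (dm lam C (cl lam h2))) (dm lam B1 (dm lam D (evalF lam w2)))) ys)
   = m2 (tens A1 B1) (m2 (tens C D) (sum_list (map (\<lambda>(h, w). tens (cl lam h) (evalF lam w)) ys)))"
proof -
  have "islin (\<lambda>W. m2 (tens A1 B1) (m2 (tens C D) W))" by (intro lin_intros)
  from islin_sum_list[OF this] show ?thesis
    by (simp add: m2_tens case_prod_unfold o_def)
qed

lemma cop_One: "cop (One t) = sum_list (map (\<lambda>(h, w). tens (cl lam h) (lmap One (evalT lam w))) (admT t))"
  by (simp add: coprod_a_def case_prod_unfold o_def)

lemma Dx_alt: "Dx x = tens (cl lam []) (sg (cdec (Some x))) + tens (cl lam [PDec x]) (sg (cdec None))"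
  by (simp add: Dx_def dec_def)

lemma cop_More: "cop (More t x F) = m2 (cop (One t)) (m2 (Dx x) (cop F))"
proof -
  have inner: "sum_list (map (\<lambda>(h2, w2). tens (cl lam (h1 @ hx @ h2)) (evalF lam (MMore w1 s w2))) (admF F))
     = m2 (tens (cl lam h1) (lmap One (evalT lam w1))) (m2 (tens (cl lam hx) (sg (cdec s))) (cop F))" for h1 hx w1 s
    unfolding cl_append evalF.simps coprod_a_def by (rule K)
  have pw: "sum_list (map (\<lambda>(h, w). tens (cl lam h) (evalF lam w))
          ((\<lambda>(h1, w1). concat (map (\<lambda>(hx, s). map (\<lambda>(h2, w2). (h1 @ hx @ h2, MMore w1 s w2)) (admF F)) [([], Some x), ([PDec x], None)])) z))
       = (\<lambda>(h1, w1). m2 (tens (cl lam h1) (lmap One (evalT lam w1))) (m2 (Dx x) (cop F))) z" for z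
  proof -
    obtain h1 w1 where z: "z = (h1, w1)" by (cases z)
    have "m2 (tens (cl lam h1) (lmap One (evalT lam w1))) (m2 (Dx x) (cop F))
      = m2 (tens (cl lam h1) (lmap One (evalT lam w1))) (m2 (tens (cl lam []) (sg (cdec (Some x)))) (cop F))
       + m2 (tens (cl lam h1) (lmap One (evalT lam w1))) (m2 (tens (cl lam [PDec x]) (sg (cdec None))) (cop F))"
      unfolding Dx_alt by simp
    also have "\<dots> = sum_list (map (\<lambda>(h2, w2). tens (cl lam (h1 @ [] @ h2)) (evalF lam (MMore w1 (Some x) w2))) (admF F))
       + sum_list (map (\<lambda>(h2, w2). tens (cl lam (h1 @ [PDec x] @ h2)) (evalF lam (MMore w1 None w2))) (admF F))"
      unfolding inner ..
    finally show ?thesis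
      unfolding z by (simp add: map_map o_def case_prod_unfold sum_list_concat' del: append.simps append_Nil)
  qed
  have "cop (More t x F) = sum_list (map (\<lambda>(h1, w1). m2 (tens (cl lam h1) (lmap One (evalT lam w1))) (m2 (Dx x) (cop F))) (admT t))"
    unfolding coprod_a_def[of lam "More t x F"] admF.simps map_concat sum_list_concat' map_map o_def pw ..
  also have "\<dots> = m2 (cop (One t)) (m2 (Dx x) (cop F))"
  proof -
    have "islin (\<lambda>W. m2 W (m2 (Dx x) (cop F)))" by (intro lin_intros)
    from islin_sum_list[OF this] show ?thesis
      unfolding cop_One by (simp add: case_prod_unfold o_def)
  qed
  finally show ?thesis .
qed

end

context fixes lam :: "'k::comm_ring_1" begin

abbreviation Dl :: "('x forest \<Rightarrow>\<^sub>0 'k) \<Rightarrow> ('x forest \<times> 'x forest \<Rightarrow>\<^sub>0 'k)" where "Dl \<equiv> lin (coprod_a lam)"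

lemma Lt_single[simp]: "Lt (sg (a, b)) = sg (a, One (Bp b))"
  by simp

lemma c2lin: "Dl (Bl W) = tens (Bl W) (sg bul) + Lt (Dl W)"
  by (rule islin_eqI[where f="\<lambda>W. Dl (Bl W)"]) (auto intro!: lin_intros simp: cop_Bp)

lemma cop_app: "cop lam (app S y R) = m2 lam (cop lam S) (m2 lam (Dx y) (cop lam R))"
proof (induction S y R rule: app.induct)
  case (1 t x R)
  then show ?case by (simp add: cop_More)
next
  case (2 t z S x R)
  then show ?case by (simp add: cop_More m2_assoc)
qed

lemma K1: "m2 lam (tens A (sg bul)) (Lt V) = Lt (m2 lam (tens A (sg bul)) V)"
proof (rule bilin_eqI[where L="\<lambda>A V. m2 lam (tens A (sg bul)) (Lt V)"], (intro lin_intros)+)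
  fix a and c :: "'x forest \<times> 'x forest"
  show "m2 lam (tens (sg a) (sg bul)) (Lt (sg c)) = Lt (m2 lam (tens (sg a) (sg bul)) (sg c))"
    by (cases c) (simp add: Lt_tens)
qed

lemma K2: "m2 lam (Lt U) (tens C (sg bul)) = Lt (m2 lam U (tens C (sg bul)))"
proof (rule bilin_eqI[where L="\<lambda>U C. m2 lam (Lt U) (tens C (sg bul))"], (intro lin_intros)+)
  fix c and a :: "'x forest \<times> 'x forest"
  show "m2 lam (Lt (sg a)) (tens (sg c) (sg bul)) = Lt (m2 lam (sg a) (tens (sg c) (sg bul)))"
    by (cases a) (simp add: Lt_tens)
qed

lemma K3: "m2 lam (Lt U) (Lt V) = Lt (m2 lam (Lt U) V + m2 lam U (Lt V) + smul lam (m2 lam U V))"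
proof (rule bilin_eqI[where L="\<lambda>U V. m2 lam (Lt U) (Lt V)"], (intro lin_intros)+)
  fix a c :: "'x forest \<times> 'x forest"
  show "m2 lam (Lt (sg a)) (Lt (sg c)) = Lt (m2 lam (Lt (sg a)) (sg c) + m2 lam (sg a) (Lt (sg c)) + smul lam (m2 lam (sg a) (sg c)))"
    by (cases a; cases c) (simp add: Lt_tens RB_basis)
qed


lemma mult_basis: "Dl (fp lam (P::'x forest) Q) = m2 lam (cop lam P) (cop lam Q)"
proof (induction "size P + size Q" arbitrary: P Q rule: less_induct)
  case less
  show ?case
  proof (cases P)
    case (More t x P')
    have "Dl (fp lam P Q) = lin (\<lambda>R. m2 lam (cop lam (One t)) (m2 lam (Dx x) (cop lam R))) (fp lam P' Q)"
      unfolding More More_app fp_app_left lin_lmap cop_app ..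
    also have "\<dots> = m2 lam (cop lam (One t)) (m2 lam (Dx x) (Dl (fp lam P' Q)))"
      by (rule lin_comp) (intro lin_intros)
    also have "\<dots> = m2 lam (cop lam (One t)) (m2 lam (Dx x) (m2 lam (cop lam P') (cop lam Q)))"
      using less(1)[of P' Q] More by simp
    also have "\<dots> = m2 lam (cop lam P) (cop lam Q)"
      unfolding More cop_More m2_assoc ..
    finally show ?thesis .
  next
    case (One p)
    show ?thesis
    proof (cases Q)
      case (More q y Q')
      have "Dl (fp lam P Q) = lin (\<lambda>V. m2 lam (cop lam V) (m2 lam (Dx y) (cop lam Q'))) (fp lam P (One q))"
        unfolding More More_app fp_app_right lin_lmap cop_app ..
      also have "\<dots> = m2 lam (Dl (fp lam P (One q))) (m2 lam (Dx y) (cop lam Q'))"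
        by (rule lin_comp) (intro lin_intros)
      also have "\<dots> = m2 lam (m2 lam (cop lam P) (cop lam (One q))) (m2 lam (Dx y) (cop lam Q'))"
        using less(1)[of P "One q"] More by simp
      also have "\<dots> = m2 lam (cop lam P) (cop lam Q)"
        unfolding More cop_More m2_assoc ..
      finally show ?thesis .
    next
      case (One q)
      note Qq = One
      show ?thesis
      proof (cases "p = Dot \<or> q = Dot")
        case True
        then show ?thesis using \<open>P = One p\<close> Qq by (auto simp: cop_bul)
      next
        case False
        then obtain F G where PQ: "P = One (Bp F)" "Q = One (Bp G)"
          using \<open>P = One p\<close> Qq by (metis tree.exhaust)
        define e :: "'x forest \<Rightarrow>\<^sub>0 'k" where "e = sg bul"
        define A :: "'x forest \<Rightarrow>\<^sub>0 'k" where "A = sg P"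
        define C :: "'x forest \<Rightarrow>\<^sub>0 'k" where "C = sg Q"
        define U where "U = cop lam F"
        define V where "V = cop lam G"
        define X where "X = fp lam P G + fp lam F Q + smul lam (fp lam F G)"
        have IH: "Dl (fp lam A' B') = m2 lam (cop lam A') (cop lam B')"
          if "size A' + size B' < size P + size Q" for A' B' :: "'x forest"
          by (rule less(1)) (rule that)
        have cP: "cop lam P = tens A e + Lt U"
          unfolding PQ A_def e_def U_def by (simp add: cop_Bp)
        have cQ: "cop lam Q = tens C e + Lt V"
          unfolding PQ C_def e_def V_def by (simp add: cop_Bp)
        have BX: "Bl X = fp lam P Q" and BX': "Bl X = dm lam A C"
          unfolding X_def PQ A_def C_def by (simp_all add: RB_basis)
        have DX: "Dl X = m2 lam (cop lam P) V + m2 lam U (cop lam Q) + smul lam (m2 lam U V)"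
          unfolding X_def U_def V_def using PQ by (simp add: IH)
        have "Dl (fp lam P Q) = tens (Bl X) e + Lt (Dl X)"
          unfolding e_def BX[symmetric] by (rule c2lin)
        also have "\<dots> = tens (dm lam A C) e + Lt (m2 lam (tens A e) V) + Lt (m2 lam U (tens C e))
             + Lt (m2 lam (Lt U) V + m2 lam U (Lt V) + smul lam (m2 lam U V))"
          unfolding BX' DX cP cQ by (simp add: algebra_simps)
        also have "\<dots> = m2 lam (tens A e) (tens C e) + m2 lam (tens A e) (Lt V) + m2 lam (Lt U) (tens C e) + m2 lam (Lt U) (Lt V)"
          unfolding e_def K1 K2 K3 m2_tens by simp
        also have "\<dots> = m2 lam (cop lam P) (cop lam Q)"
          unfolding cP cQ by (simp add: algebra_simps)
        finally show ?thesis .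
      qed
    qed
  qed
qed

lemma mult: "Dl (dm lam p q) = m2 lam (Dl p) (Dl q)"
  by (rule bilin_eqI[where L="\<lambda>p q. Dl (dm lam p q)"], (intro lin_intros)+) (simp add: mult_basis)

end

lemma lfun_lmap[simp]: "lfun f (lmap g p) = lfun (\<lambda>a. f (g a)) p"
  by (simp add: lmap_def lfun_lin)
lemma lfun_fzero[simp]: "lfun (\<lambda>a. 0) p = 0"
  by (simp add: lfun_def)
lemma lfun_fmult1: "lfun (\<lambda>a. c * f a) p = c * lfun f p"
  unfolding lfun_def sum_distrib_left by (simp add: ac_simps)
lemma lfun_fmult2: "lfun (\<lambda>a. f a * c) p = lfun f p * c"
  unfolding lfun_def sum_distrib_right by (simp add: ac_simps)
lemma smul_sum_left: "smul (sum g S) q = (\<Sum>x\<in>S. smul (g x) q)"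
  by (induction S rule: infinite_finite_induct) (auto simp: smul_add2)
lemma lin_smul_const: "lin (\<lambda>a. smul (f a) q) p = smul (lfun f p) q"
  by (simp add: lin_def lfun_def smul_sum_left)

lemma eps_bul[simp]: "eps_a bul = 1" and eps_More[simp]: "eps_a (More t x F) = 0"
  and eps_OneBp[simp]: "eps_a (One (Bp F)) = 0"
  by (simp_all add: eps_a_def)

lemma eps_dec[simp]: "eps_a (dec x) = 0"
  by (simp add: dec_def)

definition E1 :: "('x forest \<times> 'x forest \<Rightarrow>\<^sub>0 'k::comm_ring_1) \<Rightarrow> ('x forest \<Rightarrow>\<^sub>0 'k)" where
  "E1 W = lin (\<lambda>(a, b). smul (eps_a a) (sg b)) W"
definition E2 :: "('x forest \<times> 'x forest \<Rightarrow>\<^sub>0 'k::comm_ring_1) \<Rightarrow> ('x forest \<Rightarrow>\<^sub>0 'k)" where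
  "E2 W = lin (\<lambda>(a, b). smul (eps_a b) (sg a)) W"
lemma islin_E1[lin_intros]: "islin f \<Longrightarrow> islin (\<lambda>p. E1 (f p))"
  unfolding E1_def by (rule lin_intros)
lemma islin_E2[lin_intros]: "islin f \<Longrightarrow> islin (\<lambda>p. E2 (f p))"
  unfolding E2_def by (rule lin_intros)
lemma E1_sg[simp]: "E1 (Poly_Mapping.single (a, b) c) = Poly_Mapping.single b (c * eps_a a)"
  by (simp add: E1_def)
lemma E2_sg[simp]: "E2 (Poly_Mapping.single (a, b) c) = Poly_Mapping.single a (c * eps_a b)"
  by (simp add: E2_def)
lemma E1_add[simp]: "E1 (p + q) = E1 p + E1 q" by (simp add: E1_def)
lemma E2_add[simp]: "E2 (p + q) = E2 p + E2 q" by (simp add: E2_def)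

context fixes lam :: "'k::comm_ring_1" begin

lemma eps_tprod: "lfun (\<lambda>s. eps_a (One s) :: 'k) (tprod lam p q) = eps_a (One p) * eps_a (One q)"
  by (cases p; cases q) (simp_all add: eps_a_def)

lemma eps_mult_basis: "lfun eps_a (fp lam P Q) = (eps_a P * eps_a Q :: 'k)"
proof (cases P)
  case (More t x P')
  then show ?thesis by (simp add: fp_More)
next
  case (One p)
  then show ?thesis
  proof (cases Q)
    case (More q y Q')
    then show ?thesis using One by (simp add: fp_One_More)
  next
    case (One q)
    then show ?thesis using \<open>P = One p\<close> by (simp add: fp_One_One eps_tprod)
  qed
qed

lemma eps_mult: "lfun eps_a (dm lam p q) = (lfun eps_a p * lfun eps_a q :: 'k)"
  by (simp add: diam_def lfun_lin eps_mult_basis lfun_fmult1 lfun_fmult2)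

lemma E1_tens: "E1 (tens p q) = smul (lfun eps_a p) q"
proof -
  have "E1 (tens p q) = lin (\<lambda>a. smul (eps_a a) (lin sg q)) p"
    unfolding E1_def tens_def lin_lin by (simp del: smul_single add: lin_fsmul)
  then show ?thesis by (simp del: smul_single add: lin_smul_const)
qed
lemma E2_tens: "E2 (tens p q) = smul (lfun eps_a q) p"
proof -
  have "E2 (tens p q) = lin (\<lambda>a. lin (\<lambda>b. smul (eps_a b) (sg a)) q) p"
    unfolding E2_def tens_def lin_lin by (simp del: smul_single)
  also have "\<dots> = lin (\<lambda>a. smul (lfun eps_a q) (sg a)) p"
    by (simp del: smul_single add: lin_smul_const)
  finally show ?thesis by (simp del: smul_single add: lin_fsmul)
qed

lemma E1_mult: "E1 (m2 lam U V) = dm lam (E1 U) (E1 V)"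
proof (rule bilin_eqI[where L="\<lambda>U V. E1 (m2 lam U V)"], (intro lin_intros)+)
  fix a c :: "'x forest \<times> 'x forest"
  show "E1 (m2 lam (sg a) (sg c)) = dm lam (E1 (sg a)) (E1 (sg c))"
    by (cases a; cases c) (simp add: E1_tens eps_mult_basis)
qed
lemma E2_mult: "E2 (m2 lam U V) = dm lam (E2 U) (E2 V)"
proof (rule bilin_eqI[where L="\<lambda>U V. E2 (m2 lam U V)"], (intro lin_intros)+)
  fix a c :: "'x forest \<times> 'x forest"
  show "E2 (m2 lam (sg a) (sg c)) = dm lam (E2 (sg a)) (E2 (sg c))"
    by (cases a; cases c) (simp add: E2_tens eps_mult_basis mult.commute)
qed

lemma E1_Lt: "E1 (Lt W) = Bl (E1 W)"
proof (rule islin_eqI[where f="\<lambda>W. E1 (Lt W)"], (intro lin_intros)+)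
  fix a :: "'x forest \<times> 'x forest"
  show "E1 (Lt (sg a)) = Bl (E1 (sg a))" by (cases a) simp
qed
lemma E2_Lt: "E2 (Lt W) = 0"
proof (rule islin_eqI[where f="\<lambda>W. E2 (Lt W)"], (intro lin_intros)+)
  fix a :: "'x forest \<times> 'x forest"
  show "E2 (Lt (sg a)) = 0" by (cases a) simp
qed

lemma E1_Dx: "E1 (Dx x) = sg (dec x)" and E2_Dx: "E2 (Dx x) = sg (dec x)"
  by (simp_all add: Dx_def)

lemma counit_basis: "E1 (cop lam (P::'x forest)) = sg P \<and> E2 (cop lam P) = sg P"
proof (induction "size P" arbitrary: P rule: less_induct)
  case less
  show ?case
  proof (cases P)
    case (More t x P')
    have "E1 (cop lam P) = sg P" "E2 (cop lam P) = sg P"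
      using less[of "One t"] less[of P'] More
      by (simp_all add: cop_More E1_mult E2_mult E1_Dx E2_Dx dec_def fp_One_More fp_More)
    then show ?thesis by simp
  next
    case (One p)
    then show ?thesis
    proof (cases p)
      case Dot
      then show ?thesis using One by (simp add: cop_bul)
    next
      case (Bp F)
      then show ?thesis using One less[of F] by (simp add: cop_Bp E1_Lt E2_Lt)
    qed
  qed
qed

end

definition TA :: "('a \<times> 'b \<Rightarrow>\<^sub>0 'k::comm_ring_1) \<Rightarrow> ('c \<Rightarrow>\<^sub>0 'k) \<Rightarrow> ('a \<times> 'b \<times> 'c \<Rightarrow>\<^sub>0 'k)" where
  "TA W q = lin (\<lambda>p. tens (sg (fst p)) (tens (sg (snd p)) q)) W"

lemma TA_sg[simp]: "TA (Poly_Mapping.single (a1, a2) c) q = smul c (tens (sg a1) (tens (sg a2) q))"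
  by (simp add: TA_def)
lemma TA_add1[simp]: "TA (p + p') q = TA p q + TA p' q"
  by (simp add: TA_def)
lemma islin_TA1[lin_intros]: "islin f \<Longrightarrow> islin (\<lambda>p. TA (f p) q)"
  unfolding TA_def by (rule lin_intros)
lemma islin_TA2[lin_intros]: "islin f \<Longrightarrow> islin (\<lambda>p. TA W (f p))"
  unfolding TA_def islin_def by (simp add: lin_fadd lin_fsmul)

lemma TA_tens: "TA (tens p1 p2) q = tens p1 (tens p2 q)"
  by (rule bilin_eqI[where L="\<lambda>p1 p2. TA (tens p1 p2) q"], (intro lin_intros)+) simp

definition L3 :: "('a \<times> 'b \<times> 'x forest \<Rightarrow>\<^sub>0 'k::comm_ring_1) \<Rightarrow> ('a \<times> 'b \<times> 'x forest \<Rightarrow>\<^sub>0 'k)" where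
  "L3 W = lin (\<lambda>p. sg (fst p, fst (snd p), One (Bp (snd (snd p))))) W"
lemma L3_sg[simp]: "L3 (Poly_Mapping.single (a, b, c) d) = Poly_Mapping.single (a, b, One (Bp c)) d"
  by (simp add: L3_def)
lemma islin_L3[lin_intros]: "islin f \<Longrightarrow> islin (\<lambda>p. L3 (f p))"
  unfolding L3_def by (rule lin_intros)
lemma L3_add[simp]: "L3 (p + q) = L3 p + L3 q" by (simp add: L3_def)

lemma L3_tens: "L3 (tens p W) = tens p (Lt W)"
proof (rule bilin_eqI[where L="\<lambda>p W. L3 (tens p W)"], (intro lin_intros)+)
  fix a and b :: "'x forest \<times> 'x forest"
  show "L3 (tens (sg a) (sg b)) = tens (sg a) (Lt (sg b))" by (cases b) simp
qed

lemma L3_TA: "L3 (TA W q) = TA W (Bl q)"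
proof (rule bilin_eqI[where L="\<lambda>W q. L3 (TA W q)"], (intro lin_intros)+)
  fix a :: "'a \<times> 'b" and b
  show "L3 (TA (sg a) (sg b)) = TA (sg a) (Bl (sg b))" by (cases a) simp
qed

context fixes lam :: "'k::comm_ring_1" begin

abbreviation m3 where "m3 \<equiv> mt (dm lam) (m2 lam)"

definition C1 :: "('x forest \<times> 'x forest \<Rightarrow>\<^sub>0 'k) \<Rightarrow> ('x forest \<times> 'x forest \<times> 'x forest \<Rightarrow>\<^sub>0 'k)" where
  "C1 W = lin (\<lambda>p. TA (cop lam (fst p)) (sg (snd p))) W"
definition C2 :: "('x forest \<times> 'x forest \<Rightarrow>\<^sub>0 'k) \<Rightarrow> ('x forest \<times> 'x forest \<times> 'x forest \<Rightarrow>\<^sub>0 'k)" where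
  "C2 W = lin (\<lambda>p. tens (sg (fst p)) (cop lam (snd p))) W"

lemma C1_sg[simp]: "C1 (Poly_Mapping.single (a, b) c) = smul c (TA (cop lam a) (sg b))"
  by (simp add: C1_def)
lemma C2_sg[simp]: "C2 (Poly_Mapping.single (a, b) c) = smul c (tens (sg a) (cop lam b))"
  by (simp add: C2_def)
lemma islin_C1[lin_intros]: "islin f \<Longrightarrow> islin (\<lambda>p. C1 (f p))"
  unfolding C1_def by (rule lin_intros)
lemma islin_C2[lin_intros]: "islin f \<Longrightarrow> islin (\<lambda>p. C2 (f p))"
  unfolding C2_def by (rule lin_intros)
lemma C1_add[simp]: "C1 (p + q) = C1 p + C1 q" by (simp add: C1_def)
lemma C2_add[simp]: "C2 (p + q) = C2 p + C2 q" by (simp add: C2_def)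

lemma bilin_m2: "bilin (m2 lam)" by (rule bilin_mt)

lemma C1_tens: "C1 (tens p q) = TA (Dl lam p) q"
  by (rule bilin_eqI[where L="\<lambda>p q. C1 (tens p q)"], (intro lin_intros)+) simp
lemma C2_tens: "C2 (tens p q) = tens p (Dl lam q)"
  by (rule bilin_eqI[where L="\<lambda>p q. C2 (tens p q)"], (intro lin_intros)+) simp

lemma TA_mult: "TA (m2 lam W1 W2) (dm lam q1 q2) = m3 (TA W1 q1) (TA W2 q2)"
proof -
  have 1: "TA (m2 lam (sg w1) (sg w2)) (dm lam q1 q2) = m3 (TA (sg w1) q1) (TA (sg w2) q2)" for w1 w2
  proof (rule bilin_eqI[where L="\<lambda>q1 q2. TA (m2 lam (sg w1) (sg w2)) (dm lam q1 q2)"], (intro lin_intros)+)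
    fix b d
    show "TA (m2 lam (sg w1) (sg w2)) (dm lam (sg b) (sg d)) = m3 (TA (sg w1) (sg b)) (TA (sg w2) (sg d))"
      by (cases w1; cases w2) (simp add: TA_tens)
  qed
  show ?thesis
    by (rule bilin_eqI[where L="\<lambda>W1 W2. TA (m2 lam W1 W2) (dm lam q1 q2)"], (intro lin_intros)+) (rule 1)
qed

lemma C1_mult: "C1 (m2 lam U V) = m3 (C1 U) (C1 V)"
proof (rule bilin_eqI[where L="\<lambda>U V. C1 (m2 lam U V)"], (intro lin_intros)+)
  fix a c :: "'x forest \<times> 'x forest"
  show "C1 (m2 lam (sg a) (sg c)) = m3 (C1 (sg a)) (C1 (sg c))"
    by (cases a; cases c) (simp add: C1_tens mult_basis flip: TA_mult)
qed

lemma C2_mult: "C2 (m2 lam U V) = m3 (C2 U) (C2 V)"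
proof (rule bilin_eqI[where L="\<lambda>U V. C2 (m2 lam U V)"], (intro lin_intros)+)
  fix a c :: "'x forest \<times> 'x forest"
  show "C2 (m2 lam (sg a) (sg c)) = m3 (C2 (sg a)) (C2 (sg c))"
    by (cases a; cases c) (simp add: C2_tens mult_basis mt_tens[OF bilin_dm bilin_m2])
qed


definition T4 :: "('x forest \<times> 'x forest \<Rightarrow>\<^sub>0 'k) \<Rightarrow> ('x forest \<times> 'x forest \<times> 'x forest \<Rightarrow>\<^sub>0 'k)" where
  "T4 W = lin (\<lambda>p. sg (fst p, One (Bp (snd p)), bul)) W"
lemma islin_T4[lin_intros]: "islin f \<Longrightarrow> islin (\<lambda>p. T4 (f p))"
  unfolding T4_def by (rule lin_intros)

lemma C1_Lt: "C1 (Lt W) = L3 (C1 W)"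
proof (rule islin_eqI[where f="\<lambda>W. C1 (Lt W)"], (intro lin_intros)+)
  fix a :: "'x forest \<times> 'x forest"
  show "C1 (Lt (sg a)) = L3 (C1 (sg a))" by (cases a) (simp add: L3_TA)
qed

lemma C2_Lt: "C2 (Lt W) = T4 W + L3 (C2 W)"
proof (rule islin_eqI[where f="\<lambda>W. C2 (Lt W)"], (intro lin_intros)+)
  fix a :: "'x forest \<times> 'x forest"
  show "C2 (Lt (sg a)) = T4 (sg a) + L3 (C2 (sg a))" by (cases a) (simp add: L3_tens cop_Bp T4_def)
qed

lemma TA_Lt: "TA (Lt W) (sg bul) = T4 W"
proof (rule islin_eqI[where f="\<lambda>W. TA (Lt W) (sg bul)"], (intro lin_intros)+)
  fix a :: "'x forest \<times> 'x forest"
  show "TA (Lt (sg a)) (sg bul) = T4 (sg a)" by (cases a) (simp add: T4_def)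
qed

lemma cop_dec: "cop lam (dec x) = Dx x"
  unfolding dec_def by (simp add: cop_More cop_bul)

lemma C_Dx: "C1 (Dx x) = C2 (Dx x)"
  unfolding Dx_def by (simp add: cop_dec cop_bul add_ac Dx_def)

lemma coassoc_basis: "C1 (cop lam (P::'x forest)) = C2 (cop lam P)"
proof (induction "size P" arbitrary: P rule: less_induct)
  case less
  show ?case
  proof (cases P)
    case (More t x P')
    then show ?thesis
      using less[of "One t"] less[of P'] by (simp add: cop_More C1_mult C2_mult C_Dx)
  next
    case (One p)
    then show ?thesis
    proof (cases p)
      case Dot
      then show ?thesis using One by (simp add: cop_bul)
    next
      case (Bp F)
      have "C1 (cop lam P) = TA (sg (P, bul)) (sg bul) + T4 (cop lam F) + L3 (C1 (cop lam F))"
        using One Bp by (simp add: cop_Bp C1_Lt TA_Lt)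
      also have "\<dots> = C2 (cop lam P)"
        using One Bp less[of F] by (simp add: cop_Bp C2_Lt cop_bul)
      finally show ?thesis .
    qed
  qed
qed

lemma coassoc: "C1 (Dl lam p) = C2 (Dl lam p)"
  by (rule islin_eqI[where f="\<lambda>p. C1 (Dl lam p)"], (intro lin_intros)+) (simp add: coassoc_basis)

end

lemma TA_sg_alt: "TA W (sg b) = lin (\<lambda>(a1, a2). sg (a1, a2, b)) W"
proof (rule islin_eqI[where f="\<lambda>W. TA W (sg b)"], (intro lin_intros)+)
  fix a :: "'a \<times> 'b"
  show "TA (sg a) (sg b) = lin (\<lambda>(a1, a2). sg (a1, a2, b)) (sg a)" by (cases a) simp
qed

lemma tens_sg_alt: "tens (sg a) W = lin (\<lambda>(b1, b2). sg (a, b1, b2)) W"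
proof (rule islin_eqI[where f="\<lambda>W. tens (sg a) W"], (intro lin_intros)+)
  fix b :: "'b \<times> 'c"
  show "tens (sg a) (sg b) = lin (\<lambda>(b1, b2). sg (a, b1, b2)) (sg b)" by (cases b) simp
qed

theorem mainTheorem2:
  fixes lam :: "'k::comm_ring_1"
  shows "bialgebra (fprod lam :: 'x forest \<Rightarrow> 'x forest \<Rightarrow> ('x forest \<Rightarrow>\<^sub>0 'k))
           (Poly_Mapping.single bul 1) (coprod_a lam) eps_a"
proof -
  have C1e: "C1 lam W = lin (\<lambda>(a, b). lin (\<lambda>(a1, a2). Poly_Mapping.single (a1, a2, b) 1) (coprod_a lam a)) W" for W
    unfolding C1_def by (rule lin_cong) (auto simp: TA_sg_alt)
  have C2e: "C2 lam W = lin (\<lambda>(a, b). lin (\<lambda>(b1, b2). Poly_Mapping.single (a, b1, b2) 1) (coprod_a lam b)) W" for W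
    unfolding C2_def by (rule lin_cong) (auto simp: tens_sg_alt)
  have E1e: "E1 (Dl lam p) = p" for p :: "'x forest \<Rightarrow>\<^sub>0 'k"
    by (rule islin_eqI[where f="\<lambda>p. E1 (Dl lam p)"], (intro lin_intros)+) (simp add: counit_basis)
  have E2e: "E2 (Dl lam p) = p" for p :: "'x forest \<Rightarrow>\<^sub>0 'k"
    by (rule islin_eqI[where f="\<lambda>p. E2 (Dl lam p)"], (intro lin_intros)+) (simp add: counit_basis)
  show ?thesis
    unfolding bialgebra_def Let_def
    apply (fold diam_def)
    apply (fold mt_def)
    apply (intro conjI allI)
    subgoal by (rule assoc)
    subgoal by simp
    subgoal by simp
    subgoal using coassoc[of lam] C1e C2e by metis
    subgoal using E1e unfolding E1_def .
    subgoal using E2e unfolding E2_def .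
    subgoal by (rule mult)
    subgoal by (simp add: cop_bul)
    subgoal by (rule eps_mult)
    subgoal by simp
    done
qed


end
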